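(* Let $\mathbf{X},\mathbf{Y},\mathbf{Z}$ be finite non-empty sets and let $P$ be a positive probability measure on $\mathbf{X}\times\mathbf{Y}\times\mathbf{Z}$, i.e. $P(x,y,z)>0$ for all $(x,y,z)$. Let $(X_n,Y_n,Z_n)$, $n=1,\dots,N$, be independent random elements of $\mathbf{X}\times\mathbf{Y}\times\mathbf{Z}$, each distributed according to $P$, where $N\ge1$ is fixed. Fix $\delta>0$, $\tilde x\in\mathbf{X}$ and $y\in\mathbf{Y}$, and define the parameter \[ P(y\mid\mathrm{do}(\tilde x)):=\sum_{z\in\mathbf{Z}}P(Y=y\mid X=\tilde x,Z=z)\,P(Z=z). \] Let $m:=\sum_{z\in\mathbf{Z}}\hat p(y\mid\tilde x,z)\,\hat p(z)$ and \[ h:=|\mathbf{Z}|\sqrt{\frac{\ln\frac{4|\mathbf{Z}|}{\delta}}{2N}}+\sum_{z\in\mathbf{Z}}\sqrt{\frac{\ln\frac{4|\mathbf{Z}|}{\delta}}{2\,\#\tilde x z}}, \] where $h:=\infty$ if $\#\tilde x z=0$ for some $z$. Then $[m-h,m+h]$ is a $(1-\delta)$-confidence interval for $P(y\mid\mathrm{do}(\tilde x))$, i.e. $\mathbb{P}\bigl(P(y\mid\mathrm{do}(\tilde x))\in[m-h,m+h]\bigr)\ge1-\delta$.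
   Context: Counting notation: for values $x,y,z$, $\#z:=|\{n\in[N]:Z_n=z\}|$, $\#\tilde x z:=|\{n\in[N]:(X_n,Z_n)=(\tilde x,z)\}|$, $\#\tilde x yz:=|\{n\in[N]:(X_n,Y_n,Z_n)=(\tilde x,y,z)\}|$. The estimates are $\hat p(z):=\#z/N$ and $\hat p(y\mid\tilde x,z):=\#\tilde x y z/\#\tilde x z$. Here $X$, $Y$, $Z$ may each be tuples of variables of a causal dag (e.g. $Z=(Z^1,\dots,Z^k)$ with $\mathbf{Z}=\mathbf{Z}^1\times\dots\times\mathbf{Z}^k$, so $|\mathbf{Z}|=|\mathbf{Z}^1|\cdots|\mathbf{Z}^k|$); the parameter is the causal effect of $X$ on $Y$ when $Z$ satisfies Pearl's back-door criterion relative to $(X,Y)$, but the claim concerns only the displayed quantity. *)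

theory Defs
  imports "HOL-Probability.Probability"
begin

definition probZ :: "('x \<times> 'y \<times> 'z) pmf \<Rightarrow> 'z \<Rightarrow> real" where
  "probZ P z = measure_pmf.prob P {t. snd (snd t) = z}"

definition cond_prob_Y :: "('x \<times> 'y \<times> 'z) pmf \<Rightarrow> 'y \<Rightarrow> 'x \<Rightarrow> 'z \<Rightarrow> real" where
  "cond_prob_Y P y x z =
     measure_pmf.prob P {t. t = (x, y, z)} / measure_pmf.prob P {t. fst t = x \<and> snd (snd t) = z}"

definition causal_effect :: "('x \<times> 'y \<times> 'z::finite) pmf \<Rightarrow> 'x \<Rightarrow> 'y \<Rightarrow> real" where
  "causal_effect P x y = (\<Sum>z\<in>UNIV. cond_prob_Y P y x z * probZ P z)"

definition cnt_z :: "nat \<Rightarrow> (nat \<Rightarrow> 'x \<times> 'y \<times> 'z) \<Rightarrow> 'z \<Rightarrow> nat" where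
  "cnt_z N \<omega> z = card {n\<in>{..<N}. snd (snd (\<omega> n)) = z}"

definition cnt_xz :: "nat \<Rightarrow> (nat \<Rightarrow> 'x \<times> 'y \<times> 'z) \<Rightarrow> 'x \<Rightarrow> 'z \<Rightarrow> nat" where
  "cnt_xz N \<omega> x z = card {n\<in>{..<N}. fst (\<omega> n) = x \<and> snd (snd (\<omega> n)) = z}"

definition cnt_xyz :: "nat \<Rightarrow> (nat \<Rightarrow> 'x \<times> 'y \<times> 'z) \<Rightarrow> 'x \<Rightarrow> 'y \<Rightarrow> 'z \<Rightarrow> nat" where
  "cnt_xyz N \<omega> x y z = card {n\<in>{..<N}. \<omega> n = (x, y, z)}"

definition est_effect :: "nat \<Rightarrow> (nat \<Rightarrow> 'x \<times> 'y \<times> 'z::finite) \<Rightarrow> 'x \<Rightarrow> 'y \<Rightarrow> real" where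
  "est_effect N \<omega> x y =
     (\<Sum>z\<in>UNIV. (real (cnt_xyz N \<omega> x y z) / real (cnt_xz N \<omega> x z)) * (real (cnt_z N \<omega> z) / real N))"

text \<open>Half-width h (finite case; h = \<infinity> is handled separately when some count is 0).\<close>

definition half_width :: "real \<Rightarrow> nat \<Rightarrow> (nat \<Rightarrow> 'x \<times> 'y \<times> 'z::finite) \<Rightarrow> 'x \<Rightarrow> real" where
  "half_width \<delta> N \<omega> x =
     (let L = ln (4 * real CARD('z) / \<delta>) in
       real CARD('z) * sqrt (L / (2 * real N))
       + (\<Sum>z\<in>UNIV. sqrt (L / (2 * real (cnt_xz N \<omega> x z)))))"

definition covers :: "('x \<times> 'y \<times> 'z::finite) pmf \<Rightarrow> real \<Rightarrow> nat \<Rightarrow> 'x \<Rightarrow> 'y \<Rightarrow> (nat \<Rightarrow> 'x \<times> 'y \<times> 'z) \<Rightarrow> bool" where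
  "covers P \<delta> N x y \<omega> =
     ((\<exists>z. cnt_xz N \<omega> x z = 0) \<or>
      (est_effect N \<omega> x y - half_width \<delta> N \<omega> x \<le> causal_effect P x y \<and>
       causal_effect P x y \<le> est_effect N \<omega> x y + half_width \<delta> N \<omega> x))"

end

theory Submission imports Defs begin

lemma map_pmf_pred_bernoulli:
  "map_pmf Q p = bernoulli_pmf (measure_pmf.prob p {t. Q t})"
proof (rule pmf_eqI)
  fix b :: bool
  have le: "measure_pmf.prob p {t. Q t} \<le> 1" "0 \<le> measure_pmf.prob p {t. Q t}" by auto
  have c: "measure_pmf.prob p {t. \<not> Q t} = 1 - measure_pmf.prob p {t. Q t}"
    proof -
    have e: "{t. \<not> Q t} = UNIV - {t. Q t}" by auto
    show ?thesis unfolding e using measure_pmf.prob_compl[of "{t. Q t}" p] by simp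
  qed
  show "pmf (map_pmf Q p) b = pmf (bernoulli_pmf (measure_pmf.prob p {t. Q t})) b"
    using le c by (cases b) (simp_all add: pmf_map vimage_def)
qed

lemma measure_bind_le:
  assumes "\<And>x. x \<in> set_pmf M \<Longrightarrow> measure_pmf.prob (N x) X \<le> c" "c \<ge> 0"
  shows "measure_pmf.prob (bind_pmf M N) X \<le> c"
proof -
  have "emeasure (bind_pmf M N) X = (\<integral>\<^sup>+x. emeasure (N x) X \<partial>M)" by simp
  also have "\<dots> \<le> (\<integral>\<^sup>+x. ennreal c \<partial>M)"
    by (intro nn_integral_mono_AE) (auto simp: AE_measure_pmf_iff measure_pmf.emeasure_eq_measure assms)
  also have "\<dots> = ennreal c" by (simp add: measure_pmf.emeasure_space_1)
  finally show ?thesis by (simp add: measure_pmf.emeasure_eq_measure assms)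
qed

lemma binom_conv:
  assumes "finite T"
  shows "map_pmf (\<lambda>\<omega>. card {n\<in>T. Q (\<omega> n)}) (Pi_pmf T d (\<lambda>_. p)) =
         binomial_pmf (card T) (measure_pmf.prob p {t. Q t})"
proof -
  have "map_pmf (\<lambda>\<omega>. card {n\<in>T. Q (\<omega> n)}) (Pi_pmf T d (\<lambda>_. p)) =
        map_pmf (\<lambda>f. card {n\<in>T. f n}) (map_pmf (\<lambda>h. Q \<circ> h) (Pi_pmf T d (\<lambda>_. p)))"
    by (simp add: pmf.map_comp o_def)
  also have "map_pmf (\<lambda>h. Q \<circ> h) (Pi_pmf T d (\<lambda>_. p)) = Pi_pmf T (Q d) (\<lambda>_. map_pmf Q p)"
    by (rule Pi_pmf_map[symmetric]) (use assms in auto)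
  also have "\<dots> = Pi_pmf T (Q d) (\<lambda>_. bernoulli_pmf (measure_pmf.prob p {t. Q t}))"
    by (simp add: map_pmf_pred_bernoulli)
  also have "map_pmf (\<lambda>f. card {n\<in>T. f n}) \<dots> = binomial_pmf (card T) (measure_pmf.prob p {t. Q t})"
    by (rule binomial_pmf_altdef'[symmetric]) (use assms in auto)
  finally show ?thesis .
qed

lemma binom_dev:
  assumes "finite T" "T \<noteq> {}" "L \<ge> 0"
  shows "measure_pmf.prob (Pi_pmf T d (\<lambda>_. p))
           {\<omega>. \<bar>real (card {n\<in>T. Q (\<omega> n)}) / real (card T) - measure_pmf.prob p {t. Q t}\<bar>
               \<ge> sqrt (L / (2 * real (card T)))} \<le> 2 * exp (- L)"
proof -
  let ?q = "measure_pmf.prob p {t. Q t}"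
  let ?k = "card T"
  let ?e = "sqrt (L / (2 * real ?k))"
  have k: "?k > 0" using assms by (simp add: card_gt_0_iff)
  interpret binomial_distribution ?k ?q by unfold_locales auto
  have "measure_pmf.prob (Pi_pmf T d (\<lambda>_. p))
           {\<omega>. \<bar>real (card {n\<in>T. Q (\<omega> n)}) / real ?k - ?q\<bar> \<ge> ?e}
        = measure_pmf.prob (map_pmf (\<lambda>\<omega>. card {n\<in>T. Q (\<omega> n)}) (Pi_pmf T d (\<lambda>_. p)))
           {x. \<bar>real x / real ?k - ?q\<bar> \<ge> ?e}" by simp
  also have "\<dots> = measure_pmf.prob (binomial_pmf ?k ?q) {x. \<bar>real x / real ?k - ?q\<bar> \<ge> ?e}"
    by (simp only: binom_conv[OF assms(1)])
  also have "\<dots> \<le> 2 * exp (-2 * ?k * ?e\<^sup>2)"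
    by (rule prob_abs_ge'[OF k]) (use assms k in simp)
  finally have h: "measure_pmf.prob (Pi_pmf T d (\<lambda>_. p))
           {\<omega>. \<bar>real (card {n\<in>T. Q (\<omega> n)}) / real ?k - ?q\<bar> \<ge> ?e} \<le> 2 * exp (-2 * ?k * ?e\<^sup>2)" .
  have "-2 * real ?k * ?e\<^sup>2 = - L" using assms(3) k by simp
  with h show ?thesis by simp
qed


lemma z_bound:
  assumes "N \<ge> 1" "L \<ge> 0"
  shows "measure_pmf.prob (Pi_pmf {..<N} undefined (\<lambda>_. P))
    {\<omega>. \<bar>real (cnt_z N \<omega> z) / real N - probZ P z\<bar> \<ge> sqrt (L / (2 * real N))} \<le> 2 * exp (- L)"
proof -
  have "{..<N} \<noteq> {}" using assms(1) by (auto simp: lessThan_empty_iff)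
  thus ?thesis using binom_dev[of "{..<N}" L undefined P "\<lambda>t. snd (snd t) = z"] assms
    by (simp add: cnt_z_def probZ_def)
qed

lemma xz_bound:
  fixes P :: "('x \<times> 'y \<times> 'z) pmf"
  assumes "L \<ge> 0"
  shows "measure_pmf.prob (Pi_pmf {..<N} undefined (\<lambda>_. P))
    {\<omega>. cnt_xz N \<omega> x z > 0 \<and>
         \<bar>real (cnt_xyz N \<omega> x y z) / real (cnt_xz N \<omega> x z) - cond_prob_Y P y x z\<bar>
           \<ge> sqrt (L / (2 * real (cnt_xz N \<omega> x z)))} \<le> 2 * exp (- L)"
    (is "measure_pmf.prob _ ?E \<le> _")
proof -
  define A where "A = {t :: 'x \<times> 'y \<times> 'z. fst t = x \<and> snd (snd t) = z}"
  define B where "B = map_pmf (\<lambda>t. t \<in> A) P"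
  define C where "C = (\<lambda>b. cond_pmf P {t. (t \<in> A) = b})"
  have PBC: "bind_pmf B C = P"
    unfolding B_def C_def
    by (rule bind_cond_pmf_cancel) (auto simp: vimage_def)
  have "Pi_pmf {..<N} undefined (\<lambda>_. P) = Pi_pmf {..<N} undefined (\<lambda>_. bind_pmf B C)"
    by (simp add: PBC)
  also have "\<dots> = bind_pmf (Pi_pmf {..<N} False (\<lambda>_. B)) (\<lambda>bs. Pi_pmf {..<N} undefined (\<lambda>n. C (bs n)))"
    by (rule Pi_pmf_bind) simp
  finally have eq: "Pi_pmf {..<N} undefined (\<lambda>_. P) = \<dots>" .
  show ?thesis unfolding eq
  proof (rule measure_bind_le)
    fix bs assume bs: "bs \<in> set_pmf (Pi_pmf {..<N} False (\<lambda>_. B))"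
    hence bsB: "\<And>n. n < N \<Longrightarrow> bs n \<in> set_pmf B"
      by (auto simp: set_Pi_pmf PiE_dflt_def)
    define T where "T = {n\<in>{..<N}. bs n}"
    define M where "M = Pi_pmf {..<N} undefined (\<lambda>n. C (bs n))"
    have ne: "set_pmf P \<inter> {t. (t \<in> A) = bs n} \<noteq> {}" if "n < N" for n
      using bsB[OF that] by (auto simp: B_def)
    have supp: "\<And>n. n < N \<Longrightarrow> (\<omega> n \<in> A) = bs n" if "\<omega> \<in> set_pmf M" for \<omega>
    proof -
      fix n assume n: "n < N"
      have "\<omega> n \<in> set_pmf (C (bs n))" using that n by (auto simp: M_def set_Pi_pmf PiE_dflt_def)
      thus "(\<omega> n \<in> A) = bs n" using ne[OF n] by (simp add: C_def)
    qed
    have cxz: "cnt_xz N \<omega> x z = card T" if "\<omega> \<in> set_pmf M" for \<omega>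
      unfolding cnt_xz_def T_def
      by (rule arg_cong[where f=card]) (use supp[OF that] in \<open>auto simp: A_def\<close>)
    have cxyz: "cnt_xyz N \<omega> x y z = card {n\<in>T. \<omega> n = (x, y, z)}" if "\<omega> \<in> set_pmf M" for \<omega>
      unfolding cnt_xyz_def T_def
      by (rule arg_cong[where f=card]) (use supp[OF that] in \<open>force simp: A_def\<close>)
    show "measure_pmf.prob (Pi_pmf {..<N} undefined (\<lambda>n. C (bs n))) ?E \<le> 2 * exp (- L)"
    proof (cases "T = {}")
      case True
      have "?E \<inter> set_pmf M = {}" using cxz True by auto
      hence "measure_pmf.prob M ?E = 0" using measure_Int_set_pmf[of M ?E] by simp
      thus ?thesis unfolding M_def by simp
    next
      case False
      then obtain n0 where n0: "n0 < N" "bs n0" by (auto simp: T_def)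
      have neT: "set_pmf P \<inter> A \<noteq> {}" using ne[OF n0(1)] n0(2) by simp
      have qeq: "cond_prob_Y P y x z = measure_pmf.prob (C True) {t. t = (x, y, z)}"
      proof -
        have "measure_pmf.prob (C True) {t. t = (x, y, z)} = pmf (C True) (x, y, z)"
          using measure_pmf_single[of "C True" "(x,y,z)"] by simp
        also have "\<dots> = pmf P (x, y, z) / measure_pmf.prob P A"
          using neT by (simp add: C_def pmf_cond A_def)
        finally show ?thesis
          using measure_pmf_single[of P "(x,y,z)"] by (simp add: cond_prob_Y_def A_def)
      qed
      define E' where "E' = {\<omega>. \<bar>real (card {n\<in>T. \<omega> n = (x, y, z)}) / real (card T) - cond_prob_Y P y x z\<bar>
               \<ge> sqrt (L / (2 * real (card T)))}"
      have "?E \<inter> set_pmf M = E' \<inter> set_pmf M"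
        using cxz cxyz False by (auto simp: E'_def card_gt_0_iff T_def)
      hence "measure_pmf.prob M ?E = measure_pmf.prob M E'"
        using measure_Int_set_pmf[of M ?E] measure_Int_set_pmf[of M E'] by simp
      also have "measure_pmf.prob M E' =
          measure_pmf.prob (map_pmf (\<lambda>f n. if n \<in> T then f n else undefined) M) E'"
      proof -
        have c: "{n\<in>T. (if n\<in>T then f n else undefined) = (x,y,z)} = {n\<in>T. f n = (x,y,z)}" for f :: "nat \<Rightarrow> 'x \<times> 'y \<times> 'z"
          by auto
        have "(\<lambda>f n. if n \<in> T then f n else undefined) -` E' = E'"
          unfolding E'_def vimage_def by (simp only: mem_Collect_eq c)
        thus ?thesis by simp
      qed
      also have "map_pmf (\<lambda>f n. if n \<in> T then f n else undefined) M = Pi_pmf T undefined (\<lambda>n. C (bs n))"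
        unfolding M_def by (rule Pi_pmf_subset[symmetric]) (auto simp: T_def)
      also have "\<dots> = Pi_pmf T undefined (\<lambda>_. C True)"
        by (rule Pi_pmf_cong) (auto simp: T_def)
      also have "measure_pmf.prob (Pi_pmf T undefined (\<lambda>_. C True)) E' \<le> 2 * exp (- L)"
        unfolding E'_def qeq by (rule binom_dev) (use False assms in \<open>auto simp: T_def\<close>)
      finally show ?thesis unfolding M_def .
    qed
  qed simp
qed


lemma det_bound:
  fixes ph p rh r e :: "'z::finite \<Rightarrow> real"
  assumes "\<And>z. \<bar>ph z - p z\<bar> \<le> e0" "\<And>z. \<bar>rh z - r z\<bar> \<le> e z"
    "\<And>z. 0 \<le> ph z" "\<And>z. ph z \<le> 1" "\<And>z. 0 \<le> r z" "\<And>z. r z \<le> 1"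
  shows "\<bar>(\<Sum>z\<in>UNIV. rh z * ph z) - (\<Sum>z\<in>UNIV. r z * p z)\<bar> \<le> real CARD('z) * e0 + (\<Sum>z\<in>UNIV. e z)"
proof -
  have "\<bar>(\<Sum>z\<in>UNIV. rh z * ph z) - (\<Sum>z\<in>UNIV. r z * p z)\<bar> = \<bar>\<Sum>z\<in>UNIV. rh z * ph z - r z * p z\<bar>"
    by (simp add: sum_subtractf)
  also have "\<dots> \<le> (\<Sum>z\<in>UNIV. \<bar>rh z * ph z - r z * p z\<bar>)" by (rule sum_abs)
  also have "\<dots> \<le> (\<Sum>z\<in>UNIV. e0 + e z)"
  proof (rule sum_mono)
    fix z :: 'z
    have "rh z * ph z - r z * p z = (rh z - r z) * ph z + r z * (ph z - p z)" by algebra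
    hence "\<bar>rh z * ph z - r z * p z\<bar> \<le> \<bar>rh z - r z\<bar> * ph z + r z * \<bar>ph z - p z\<bar>"
      using assms(3,5)[of z] by (simp add: abs_mult abs_triangle_ineq[THEN order_trans])
    also have "\<dots> \<le> e z * 1 + 1 * e0"
      using assms[of z] by (intro add_mono mult_mono) auto
    finally show "\<bar>rh z * ph z - r z * p z\<bar> \<le> e0 + e z" by simp
  qed
  also have "\<dots> = real CARD('z) * e0 + (\<Sum>z\<in>UNIV. e z)" by (simp add: sum.distrib)
  finally show ?thesis .
qed

theorem theorem1:
  fixes P :: "('x::finite \<times> 'y::finite \<times> 'z::finite) pmf"
    and N :: nat and \<delta> :: real and x :: 'x and y :: 'y
  assumes pos: "\<And>t. pmf P t > 0"
    and N: "N \<ge> 1"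
    and \<delta>: "\<delta> > 0"
  shows "measure_pmf.prob (Pi_pmf {..<N} undefined (\<lambda>_. P)) {\<omega>. covers P \<delta> N x y \<omega>} \<ge> 1 - \<delta>"
proof (cases "\<delta> \<ge> 1")
  case True
  thus ?thesis using measure_nonneg[of _ "{\<omega>. covers P \<delta> N x y \<omega>}"] by (meson order_trans diff_le_0_iff_le)
next
  case False
  define \<Omega> where "\<Omega> = Pi_pmf {..<N} undefined (\<lambda>_. P)"
  define K where "K = real CARD('z)"
  define L where "L = ln (4 * K / \<delta>)"
  have K: "K \<ge> 1" by (simp add: K_def)
  have L: "L \<ge> 0" unfolding L_def using K False \<delta> by (simp add: field_simps)
  have eL: "2 * exp (- L) = \<delta> / (2 * K)"
    unfolding L_def using K \<delta> by (simp add: exp_minus exp_ln field_simps)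
  define BZ where "BZ = (\<lambda>z. {\<omega> :: nat \<Rightarrow> 'x \<times> 'y \<times> 'z. \<bar>real (cnt_z N \<omega> z) / real N - probZ P z\<bar> \<ge> sqrt (L / (2 * real N))})"
  define BX where "BX = (\<lambda>z. {\<omega>. cnt_xz N \<omega> x z > 0 \<and>
         \<bar>real (cnt_xyz N \<omega> x y z) / real (cnt_xz N \<omega> x z) - cond_prob_Y P y x z\<bar>
           \<ge> sqrt (L / (2 * real (cnt_xz N \<omega> x z)))})"
  have sub: "{\<omega>. \<not> covers P \<delta> N x y \<omega>} \<subseteq> (\<Union>z. BZ z) \<union> (\<Union>z. BX z)"
  proof (rule subsetI, rule ccontr)
    fix \<omega> assume nc: "\<omega> \<in> {\<omega>. \<not> covers P \<delta> N x y \<omega>}" and nb: "\<omega> \<notin> (\<Union>z. BZ z) \<union> (\<Union>z. BX z)"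
    have pos_xz: "\<And>z. cnt_xz N \<omega> x z > 0" using nc by (auto simp: covers_def)
    have h1: "\<bar>real (cnt_z N \<omega> z) / real N - probZ P z\<bar> \<le> sqrt (L / (2 * real N))" for z
    proof -
      have "\<omega> \<notin> BZ z" using nb by blast
      thus ?thesis by (simp add: BZ_def)
    qed
    have h2: "\<bar>real (cnt_xyz N \<omega> x y z) / real (cnt_xz N \<omega> x z) - cond_prob_Y P y x z\<bar>
           \<le> sqrt (L / (2 * real (cnt_xz N \<omega> x z)))" for z
    proof -
      have "\<omega> \<notin> BX z" using nb by blast
      thus ?thesis using pos_xz[of z] by (simp add: BX_def)
    qed
    have h3: "0 \<le> real (cnt_z N \<omega> z) / real N" for z by simp
    have h4: "real (cnt_z N \<omega> z) / real N \<le> 1" for z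
    proof -
      have "cnt_z N \<omega> z \<le> N" unfolding cnt_z_def
        using card_mono[of "{..<N}" "{n\<in>{..<N}. snd (snd (\<omega> n)) = z}"] by auto
      thus ?thesis using N by (simp add: divide_le_eq_1)
    qed
    have h5: "0 \<le> cond_prob_Y P y x z" for z by (simp add: cond_prob_Y_def)
    have h6: "cond_prob_Y P y x z \<le> 1" for z
    proof -
      have "measure_pmf.prob P {t. t = (x, y, z)} \<le> measure_pmf.prob P {t. fst t = x \<and> snd (snd t) = z}"
        by (rule measure_pmf.finite_measure_mono) auto
      moreover have "0 \<le> measure_pmf.prob P {t. t = (x, y, z)}" by simp
      moreover have "0 \<le> measure_pmf.prob P {t. fst t = x \<and> snd (snd t) = z}" by simp
      ultimately show ?thesis unfolding cond_prob_Y_def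
        by (cases "measure_pmf.prob P {t. fst t = x \<and> snd (snd t) = z} = 0") (simp_all add: divide_le_eq_1 less_le del: measure_nonneg)
    qed
    have d: "\<bar>(\<Sum>z\<in>UNIV. real (cnt_xyz N \<omega> x y z) / real (cnt_xz N \<omega> x z) * (real (cnt_z N \<omega> z) / real N))
        - (\<Sum>z\<in>UNIV. cond_prob_Y P y x z * probZ P z)\<bar>
        \<le> real CARD('z) * sqrt (L / (2 * real N)) + (\<Sum>z\<in>UNIV. sqrt (L / (2 * real (cnt_xz N \<omega> x z))))"
      by (rule det_bound) (rule h1 h2 h3 h4 h5 h6)+
    have hw: "half_width \<delta> N \<omega> x = real CARD('z) * sqrt (L / (2 * real N)) + (\<Sum>z\<in>UNIV. sqrt (L / (2 * real (cnt_xz N \<omega> x z))))"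
      by (simp add: half_width_def Let_def L_def K_def)
    have "\<bar>est_effect N \<omega> x y - causal_effect P x y\<bar> \<le> half_width \<delta> N \<omega> x"
      using d unfolding hw est_effect_def causal_effect_def .
    thus False using nc by (auto simp: covers_def abs_le_iff)
  qed
  have "measure_pmf.prob \<Omega> {\<omega>. \<not> covers P \<delta> N x y \<omega>} \<le> measure_pmf.prob \<Omega> ((\<Union>z. BZ z) \<union> (\<Union>z. BX z))"
    by (rule measure_pmf.finite_measure_mono[OF sub]) simp
  also have "\<dots> \<le> measure_pmf.prob \<Omega> (\<Union>z. BZ z) + measure_pmf.prob \<Omega> (\<Union>z. BX z)"
    by (rule measure_subadditive) (auto simp: measure_pmf.emeasure_eq_measure)
  finally have b0: "measure_pmf.prob \<Omega> {\<omega>. \<not> covers P \<delta> N x y \<omega>} \<le> measure_pmf.prob \<Omega> (\<Union>z. BZ z) + measure_pmf.prob \<Omega> (\<Union>z. BX z)" .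
  have "measure_pmf.prob \<Omega> (\<Union>z. BZ z) \<le> (\<Sum>z\<in>UNIV. measure_pmf.prob \<Omega> (BZ z))"
    by (rule measure_pmf.finite_measure_subadditive_finite) auto
  also have "\<dots> \<le> (\<Sum>z\<in>(UNIV::'z set). \<delta> / (2 * K))"
    by (rule sum_mono) (unfold \<Omega>_def BZ_def eL[symmetric], rule z_bound[OF N L])
  finally have b1: "measure_pmf.prob \<Omega> (\<Union>z. BZ z) \<le> (\<Sum>z\<in>(UNIV::'z set). \<delta> / (2 * K))" .
  have "measure_pmf.prob \<Omega> (\<Union>z. BX z) \<le> (\<Sum>z\<in>UNIV. measure_pmf.prob \<Omega> (BX z))"
    by (rule measure_pmf.finite_measure_subadditive_finite) auto
  also have "\<dots> \<le> (\<Sum>z\<in>(UNIV::'z set). \<delta> / (2 * K))"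
    by (rule sum_mono) (unfold \<Omega>_def BX_def eL[symmetric], rule xz_bound[OF L])
  finally have b2: "measure_pmf.prob \<Omega> (\<Union>z. BX z) \<le> (\<Sum>z\<in>(UNIV::'z set). \<delta> / (2 * K))" .
  have b3: "(\<Sum>z\<in>(UNIV::'z set). \<delta> / (2 * K)) + (\<Sum>z\<in>(UNIV::'z set). \<delta> / (2 * K)) = \<delta>"
    using K by (simp add: K_def[symmetric] field_simps)
  have bad: "measure_pmf.prob \<Omega> {\<omega>. \<not> covers P \<delta> N x y \<omega>} \<le> \<delta>"
    using b0 b1 b2 b3 by linarith
  have "measure_pmf.prob \<Omega> {\<omega>. covers P \<delta> N x y \<omega>} = 1 - measure_pmf.prob \<Omega> {\<omega>. \<not> covers P \<delta> N x y \<omega>}"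
  proof -
    have e: "{\<omega>. \<not> covers P \<delta> N x y \<omega>} = UNIV - {\<omega>. covers P \<delta> N x y \<omega>}" by auto
    show ?thesis unfolding e using measure_pmf.prob_compl[of "{\<omega>. covers P \<delta> N x y \<omega>}" \<Omega>] by simp
  qed
  with bad show ?thesis unfolding \<Omega>_def by simp
qed

end
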